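(* Assume (A1), (A2), (B1), (B2) below. Then there is a constant $L$ depending only on $k$ and $\pi$ such that for all $z,z'\in\mathbb R^d$ and all $\mu,\mu'\in\mathcal P_2(\mathbb R^d)$, $$\Big\|P_\mu\nabla\log\Big(\frac{\mu}{\pi}\Big)(z)-P_{\mu'}\nabla\log\Big(\frac{\mu'}{\pi}\Big)(z')\Big\|\le L\big(\|z-z'\|+W_2(\mu,\mu')\big).$$ (A1) There exists $B>0$ with $\|k(x,\cdot)\|_{\mathcal H_0}\le B$ and $\big(\sum_{i=1}^d\|\partial_{x_i}k(x,\cdot)\|_{\mathcal H_0}^2\big)^{1/2}\le B$ for all $x$. (A2) $H_V$ is well defined and $\|H_V(x)\|_{op}\le M$ for all $x$, for some $M>0$. (B1) There exists $C_V$ with $\|\nabla V(x)\|\le C_V$ for all $x$. (B2) There exists $D>0$ such that $k$ is continuous and $|k(x,x')-k(y,y')|\le D(\|x-y\|+\|x'-y'\|)$, and $k$ is continuously differentiable with $\|\nabla k(x,x')-\nabla k(y,y')\|\le D(\|x-y\|+\|x'-y'\|)$ for all $x,x',y,y'$.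
   Context: Target $\pi\propto e^{-V}$ on $\mathbb R^d$, $V\in C^2$. $k$ positive semi-definite kernel with RKHS $\mathcal H_0$, $\mathcal H=\mathcal H_0^d$. For any $\mu\in\mathcal P_2(\mathbb R^d)$ (possibly discrete), $P_\mu\nabla\log(\mu/\pi)(z)=-\int\big[\nabla\log\pi(x)k(x,z)+\nabla_x k(x,z)\big]d\mu(x)$. $W_2$ is the 2-Wasserstein distance. *)

theory Defs
  imports "HOL-Analysis.Analysis" "HOL-Probability.Probability"
begin

definition grad :: "('a::euclidean_space \<Rightarrow> real) \<Rightarrow> 'a \<Rightarrow> 'a" where
  "grad f x = (SOME g. (f has_derivative (\<lambda>h. g \<bullet> h)) (at x))"

definition hessian :: "('a::euclidean_space \<Rightarrow> real) \<Rightarrow> 'a \<Rightarrow> 'a \<Rightarrow> 'a" where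
  "hessian V x = frechet_derivative (grad V) (at x)"

definition psd_kernel :: "('a \<Rightarrow> 'a \<Rightarrow> real) \<Rightarrow> bool" where
  "psd_kernel k \<longleftrightarrow> (\<forall>x y. k x y = k y x) \<and>
     (\<forall>n (xs :: nat \<Rightarrow> 'a) (c :: nat \<Rightarrow> real).
        0 \<le> (\<Sum>i<n. \<Sum>j<n. c i * c j * k (xs i) (xs j)))"

text \<open>RKHS norm of a function f in the RKHS H0 of k, via the standard characterization
  of the RKHS: f belongs to H0 with norm at most C iff
  |sum c_i f(x_i)| <= C * || sum c_i k(x_i, .) ||_H0 for all finite combinations.\<close>
definition rkhs_bounded :: "('a \<Rightarrow> 'a \<Rightarrow> real) \<Rightarrow> ('a \<Rightarrow> real) \<Rightarrow> real \<Rightarrow> bool" where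
  "rkhs_bounded k f C \<longleftrightarrow>
     (\<forall>n (xs :: nat \<Rightarrow> 'a) (c :: nat \<Rightarrow> real).
        \<bar>\<Sum>i<n. c i * f (xs i)\<bar> \<le> C * sqrt (\<Sum>i<n. \<Sum>j<n. c i * c j * k (xs i) (xs j)))"

definition in_rkhs :: "('a \<Rightarrow> 'a \<Rightarrow> real) \<Rightarrow> ('a \<Rightarrow> real) \<Rightarrow> bool" where
  "in_rkhs k f \<longleftrightarrow> (\<exists>C. rkhs_bounded k f C)"

definition rkhs_norm :: "('a \<Rightarrow> 'a \<Rightarrow> real) \<Rightarrow> ('a \<Rightarrow> real) \<Rightarrow> real" where
  "rkhs_norm k f = Inf {C. 0 \<le> C \<and> rkhs_bounded k f C}"

definition P2 :: "'a::euclidean_space measure set" where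
  "P2 = {\<mu>. prob_space \<mu> \<and> sets \<mu> = sets borel \<and> (\<integral>\<^sup>+x. ennreal ((norm x)\<^sup>2) \<partial>\<mu>) < \<infinity>}"

definition couplings :: "'a::euclidean_space measure \<Rightarrow> 'a measure \<Rightarrow> ('a \<times> 'a) measure set" where
  "couplings \<mu> \<nu> = {\<gamma>. prob_space \<gamma> \<and> sets \<gamma> = sets (borel \<Otimes>\<^sub>M borel) \<and>
       distr \<gamma> borel fst = \<mu> \<and> distr \<gamma> borel snd = \<nu>}"

definition W2 :: "'a::euclidean_space measure \<Rightarrow> 'a measure \<Rightarrow> real" where
  "W2 \<mu> \<nu> = sqrt (enn2real (INF \<gamma>\<in>couplings \<mu> \<nu>.
       \<integral>\<^sup>+p. ennreal ((norm (fst p - snd p))\<^sup>2) \<partial>\<gamma>))"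

definition target_density :: "('a::euclidean_space \<Rightarrow> real) \<Rightarrow> 'a \<Rightarrow> real" where
  "target_density V x = exp (- V x) / (\<integral>y. exp (- V y) \<partial>lborel)"

text \<open>P_mu grad log(mu/pi)(z) = - int [grad log pi(x) k(x,z) + grad_x k(x,z)] dmu(x).\<close>
definition stein_field ::
  "('a::euclidean_space \<Rightarrow> 'a \<Rightarrow> real) \<Rightarrow> ('a \<Rightarrow> real) \<Rightarrow> 'a measure \<Rightarrow> 'a \<Rightarrow> 'a" where
  "stein_field k V \<mu> z = - (\<integral>x. (k x z *\<^sub>R grad (\<lambda>y. ln (target_density V y)) x
                                 + grad (\<lambda>y. k y z) x) \<partial>\<mu>)"

end

theory Submission
  imports Defs
begin

lemma grad_eqI:
  fixes f :: "'a::euclidean_space \<Rightarrow> real"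
  assumes "(f has_derivative (\<lambda>h. g \<bullet> h)) (at x)"
  shows "grad f x = g"
proof -
  have ex: "\<exists>g. (f has_derivative (\<lambda>h. g \<bullet> h)) (at x)" using assms by blast
  have "(f has_derivative (\<lambda>h. grad f x \<bullet> h)) (at x)"
    unfolding grad_def by (rule someI_ex[OF ex])
  then have "(\<lambda>h. grad f x \<bullet> h) = (\<lambda>h. g \<bullet> h)" using assms has_derivative_unique by blast
  then have "(grad f x - g) \<bullet> (grad f x - g) = 0"
    by (metis inner_diff_left diff_self)
  then show ?thesis by simp
qed

lemma grad_works:
  fixes f :: "'a::euclidean_space \<Rightarrow> real"
  assumes "f differentiable (at x)"
  shows "(f has_derivative (\<lambda>h. grad f x \<bullet> h)) (at x)"
proof -
  obtain f' where d: "(f has_derivative f') (at x)" using assms differentiable_def by blast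
  then have lin: "linear f'" using has_derivative_linear by blast
  define g where "g = (\<Sum>b\<in>Basis. f' b *\<^sub>R b)"
  have "f' h = g \<bullet> h" for h
  proof -
    have "f' h = f' (\<Sum>b\<in>Basis. (h \<bullet> b) *\<^sub>R b)" by (simp add: euclidean_representation)
    also have "\<dots> = (\<Sum>b\<in>Basis. (h \<bullet> b) * f' b)"
      using lin by (simp add: linear_sum linear_scale)
    also have "\<dots> = g \<bullet> h" by (simp add: g_def inner_sum_right inner_commute mult.commute)
    finally show ?thesis .
  qed
  then have "f' = (\<lambda>h. g \<bullet> h)" by auto
  with d have "(f has_derivative (\<lambda>h. g \<bullet> h)) (at x)" by simp
  with grad_eqI[OF this] show ?thesis by simp
qed

lemma distr_pair_snd':
  assumes "prob_space N" "prob_space M" shows "distr (N \<Otimes>\<^sub>M M) M snd = M"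
proof (intro measure_eqI)
  fix A assume A: "A \<in> sets (distr (N \<Otimes>\<^sub>M M) M snd)"
  from A have "emeasure (distr (N \<Otimes>\<^sub>M M) M snd) A = emeasure (N \<Otimes>\<^sub>M M) (space N \<times> A)"
    by (auto simp add: emeasure_distr space_pair_measure dest: sets.sets_into_space intro!: arg_cong2[where f=emeasure])
  with A assms show "emeasure (distr (N \<Otimes>\<^sub>M M) M snd) A = emeasure M A"
    by (simp add: sigma_finite_measure.emeasure_pair_measure_Times prob_space.emeasure_space_1 prob_space_imp_sigma_finite)
qed simp

lemma rkhs_point:
  fixes k :: "'a \<Rightarrow> 'a \<Rightarrow> real"
  assumes "in_rkhs k f" and psd: "psd_kernel k"
  shows "\<bar>f x\<bar> \<le> rkhs_norm k f * sqrt (k x x)"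
proof -
  let ?S = "{C. 0 \<le> C \<and> rkhs_bounded k f C}"
  obtain C0 where C0: "rkhs_bounded k f C0" using assms in_rkhs_def by blast
  have "rkhs_bounded k f (max C0 0)"
    unfolding rkhs_bounded_def
  proof (intro allI)
    fix n :: nat and xs :: "nat \<Rightarrow> 'a" and c :: "nat \<Rightarrow> real"
    have h: "\<bar>\<Sum>i<n. c i * f (xs i)\<bar> \<le> C0 * sqrt (\<Sum>i<n. \<Sum>j<n. c i * c j * k (xs i) (xs j))"
      using C0[unfolded rkhs_bounded_def, THEN spec[of _ n], THEN spec[of _ xs], THEN spec[of _ c]] .
    have "0 \<le> (\<Sum>i<n. \<Sum>j<n. c i * c j * k (xs i) (xs j))"
      using psd[unfolded psd_kernel_def] by blast
    then have "0 \<le> sqrt (\<Sum>i<n. \<Sum>j<n. c i * c j * k (xs i) (xs j))" by simp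
    then have "C0 * sqrt (\<Sum>i<n. \<Sum>j<n. c i * c j * k (xs i) (xs j)) \<le> max C0 0 * sqrt (\<Sum>i<n. \<Sum>j<n. c i * c j * k (xs i) (xs j))"
      by (intro mult_right_mono) auto
    with h show "\<bar>\<Sum>i<n. c i * f (xs i)\<bar> \<le> max C0 0 * sqrt (\<Sum>i<n. \<Sum>j<n. c i * c j * k (xs i) (xs j))"
      by linarith
  qed
  then have "max C0 0 \<in> ?S" by simp
  then have ne: "?S \<noteq> {}" by blast
  have pt: "\<bar>f x\<bar> \<le> C * sqrt (k x x)" if "C \<in> ?S" for C
  proof -
    have "rkhs_bounded k f C" using that by simp
    from this[unfolded rkhs_bounded_def, THEN spec[of _ 1], THEN spec[of _ "\<lambda>_. x"], THEN spec[of _ "\<lambda>_. 1"]]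
    show ?thesis by simp
  qed
  have bdd: "bdd_below ?S" by (rule bdd_belowI[of _ 0]) auto
  have kxx: "0 \<le> k x x"
    using psd[unfolded psd_kernel_def, THEN conjunct2, THEN spec[of _ 1], THEN spec[of _ "\<lambda>_. x"], THEN spec[of _ "\<lambda>_. 1"]]
    by simp
  show ?thesis
  proof (cases "sqrt (k x x) \<le> 0")
    case True
    obtain C where C: "C \<in> ?S" using ne by blast
    have "rkhs_norm k f \<le> C" unfolding rkhs_norm_def by (rule cInf_lower[OF C bdd])
    then have "C * sqrt (k x x) \<le> rkhs_norm k f * sqrt (k x x)" using True by (rule mult_right_mono_neg)
    then show ?thesis using pt[OF C] by linarith
  next
    case False
    then have sp: "sqrt (k x x) > 0" by simp
    have "\<bar>f x\<bar> / sqrt (k x x) \<le> rkhs_norm k f" unfolding rkhs_norm_def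
    proof (rule cInf_greatest[OF ne])
      fix C assume "C \<in> ?S"
      then have "\<bar>f x\<bar> \<le> C * sqrt (k x x)" by (rule pt)
      then show "\<bar>f x\<bar> / sqrt (k x x) \<le> C" using sp by (simp add: divide_le_eq)
    qed
    then show ?thesis using sp by (simp add: divide_le_eq)
  qed
qed

lemma coupling_props:
  assumes "\<gamma> \<in> couplings \<mu> \<nu>"
  shows "prob_space \<gamma>" "sets \<gamma> = sets borel" "distr \<gamma> borel fst = \<mu>" "distr \<gamma> borel snd = \<nu>"
    "fst \<in> measurable \<gamma> borel" "snd \<in> measurable \<gamma> borel"
    "sets \<gamma> = sets (borel \<Otimes>\<^sub>M borel)"
proof -
  show sg2: "sets \<gamma> = sets (borel \<Otimes>\<^sub>M borel)" using assms by (simp add: couplings_def)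
  then show sg: "sets \<gamma> = sets borel" by (simp only: borel_prod)
  show "prob_space \<gamma>" "distr \<gamma> borel fst = \<mu>" "distr \<gamma> borel snd = \<nu>"
    using assms by (auto simp: couplings_def)
  show "fst \<in> measurable \<gamma> borel"
    by (subst measurable_cong_sets[OF sg2 refl]) (rule measurable_fst)
  show "snd \<in> measurable \<gamma> borel"
    by (subst measurable_cong_sets[OF sg2 refl]) (rule measurable_snd)
qed

lemma P2_props:
  fixes \<mu> :: "'a::euclidean_space measure"
  assumes "\<mu> \<in> P2"
  shows "prob_space \<mu>" "sets \<mu> = sets borel" "(\<integral>\<^sup>+x. ennreal ((norm x)\<^sup>2) \<partial>\<mu>) < \<infinity>"
    "integrable \<mu> (\<lambda>x. (norm x)\<^sup>2)"
proof -
  show p: "prob_space \<mu>" and s: "sets \<mu> = sets borel" and f: "(\<integral>\<^sup>+x. ennreal ((norm x)\<^sup>2) \<partial>\<mu>) < \<infinity>"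
    using assms by (auto simp: P2_def)
  have m: "(\<lambda>x. (norm x)\<^sup>2) \<in> borel_measurable \<mu>"
    by (subst measurable_cong_sets[OF s refl]) measurable
  show "integrable \<mu> (\<lambda>x. (norm x)\<^sup>2)"
    unfolding integrable_iff_bounded using m f by simp
qed

lemma sq_le: "(norm ((a::'a::real_normed_vector) - b))\<^sup>2 \<le> 2 * (norm a)\<^sup>2 + 2 * (norm b)\<^sup>2"
proof -
  have "norm (a - b) \<le> norm a + norm b" by (rule norm_triangle_ineq4)
  then have "(norm (a - b))\<^sup>2 \<le> (norm a + norm b)\<^sup>2" by (intro power_mono) auto
  also have "\<dots> \<le> 2 * (norm a)\<^sup>2 + 2 * (norm b)\<^sup>2"
    using sum_squares_ge_zero[of "norm a - norm b" 0] by (simp add: power2_eq_square algebra_simps)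
  finally show ?thesis .
qed

lemma coupling_cost_fin:
  fixes \<mu> :: "'a::euclidean_space measure"
  assumes g: "\<gamma> \<in> couplings \<mu> \<nu>" and P: "\<mu> \<in> P2" "\<nu> \<in> P2"
  shows "(\<integral>\<^sup>+p. ennreal ((norm (fst p - snd p))\<^sup>2) \<partial>\<gamma>) < \<infinity>"
proof -
  note cp = coupling_props[OF g]
  have m1: "(\<lambda>p. ennreal ((norm (fst p))\<^sup>2)) \<in> borel_measurable \<gamma>"
    by (subst measurable_cong_sets[OF cp(7) refl]) measurable
  have m2: "(\<lambda>p. ennreal ((norm (snd p))\<^sup>2)) \<in> borel_measurable \<gamma>"
    by (subst measurable_cong_sets[OF cp(7) refl]) measurable
  have e1: "(\<integral>\<^sup>+p. ennreal ((norm (fst p))\<^sup>2) \<partial>\<gamma>) = (\<integral>\<^sup>+x. ennreal ((norm x)\<^sup>2) \<partial>\<mu>)"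
  proof -
    have "(\<integral>\<^sup>+x. ennreal ((norm x)\<^sup>2) \<partial>(distr \<gamma> borel fst)) = (\<integral>\<^sup>+p. ennreal ((norm (fst p))\<^sup>2) \<partial>\<gamma>)"
      by (rule nn_integral_distr[OF cp(5)]) measurable
    then show ?thesis using cp(3) by simp
  qed
  have e2: "(\<integral>\<^sup>+p. ennreal ((norm (snd p))\<^sup>2) \<partial>\<gamma>) = (\<integral>\<^sup>+x. ennreal ((norm x)\<^sup>2) \<partial>\<nu>)"
  proof -
    have "(\<integral>\<^sup>+x. ennreal ((norm x)\<^sup>2) \<partial>(distr \<gamma> borel snd)) = (\<integral>\<^sup>+p. ennreal ((norm (snd p))\<^sup>2) \<partial>\<gamma>)"
      by (rule nn_integral_distr[OF cp(6)]) measurable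
    then show ?thesis using cp(4) by simp
  qed
  have "(\<integral>\<^sup>+p. ennreal ((norm (fst p - snd p))\<^sup>2) \<partial>\<gamma>)
      \<le> (\<integral>\<^sup>+p. 2 * ennreal ((norm (fst p))\<^sup>2) + 2 * ennreal ((norm (snd p))\<^sup>2) \<partial>\<gamma>)"
  proof (rule nn_integral_mono)
    fix p :: "'a \<times> 'a"
    have "ennreal ((norm (fst p - snd p))\<^sup>2) \<le> ennreal (2 * (norm (fst p))\<^sup>2 + 2 * (norm (snd p))\<^sup>2)"
      by (rule ennreal_leI) (rule sq_le)
    also have "\<dots> = 2 * ennreal ((norm (fst p))\<^sup>2) + 2 * ennreal ((norm (snd p))\<^sup>2)"
      by (simp add: ennreal_plus[symmetric] ennreal_mult)
    finally show "ennreal ((norm (fst p - snd p))\<^sup>2) \<le> 2 * ennreal ((norm (fst p))\<^sup>2) + 2 * ennreal ((norm (snd p))\<^sup>2)" .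
  qed
  also have "\<dots> = 2 * (\<integral>\<^sup>+x. ennreal ((norm x)\<^sup>2) \<partial>\<mu>) + 2 * (\<integral>\<^sup>+x. ennreal ((norm x)\<^sup>2) \<partial>\<nu>)"
    using m1 m2 by (simp add: nn_integral_add nn_integral_cmult e1 e2)
  also have "\<dots> < \<infinity>" using P2_props(3)[OF P(1)] P2_props(3)[OF P(2)]
    by (simp add: ennreal_mult_less_top)
  finally show ?thesis .
qed

lemma product_coupling:
  fixes \<mu> :: "'a::euclidean_space measure"
  assumes P: "\<mu> \<in> P2" "\<nu> \<in> P2"
  shows "\<mu> \<Otimes>\<^sub>M \<nu> \<in> couplings \<mu> \<nu>"
proof -
  note p1 = P2_props[OF P(1)] and p2 = P2_props[OF P(2)]
  have "distr (\<mu> \<Otimes>\<^sub>M \<nu>) borel fst = distr (\<mu> \<Otimes>\<^sub>M \<nu>) \<mu> fst"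
    by (rule distr_cong) (auto simp: p1(2))
  also have "\<dots> = \<mu>" using p2(1) by (rule prob_space.distr_pair_fst)
  finally have d1: "distr (\<mu> \<Otimes>\<^sub>M \<nu>) borel fst = \<mu>" .
  have "distr (\<mu> \<Otimes>\<^sub>M \<nu>) borel snd = distr (\<mu> \<Otimes>\<^sub>M \<nu>) \<nu> snd"
    by (rule distr_cong) (auto simp: p2(2))
  also have "\<dots> = \<nu>" using p1(1) p2(1) by (rule distr_pair_snd')
  finally have d2: "distr (\<mu> \<Otimes>\<^sub>M \<nu>) borel snd = \<nu>" .
  have "sets (\<mu> \<Otimes>\<^sub>M \<nu>) = sets (borel \<Otimes>\<^sub>M borel)"
    by (rule sets_pair_measure_cong) (auto simp: p1(2) p2(2))
  then show ?thesis using d1 d2 p1(1) p2(1) prob_space_pair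
    unfolding couplings_def by blast
qed

theorem lemma6:
  fixes k :: "'a::euclidean_space \<Rightarrow> 'a \<Rightarrow> real" and V :: "'a \<Rightarrow> real"
  assumes psd: "psd_kernel k"
    and V_C2: "\<forall>x. V differentiable (at x)" "\<forall>x. grad V differentiable (at x)"
              "\<forall>h. continuous_on UNIV (\<lambda>x. hessian V x h)"
    and pi_int: "integrable lborel (\<lambda>x. exp (- V x))"
    and A1: "\<exists>B>0. \<forall>x. in_rkhs k (k x) \<and> rkhs_norm k (k x) \<le> B \<and>
               (\<forall>i\<in>Basis. in_rkhs k (\<lambda>y. grad (\<lambda>x'. k x' y) x \<bullet> i)) \<and>
               sqrt (\<Sum>i\<in>Basis. (rkhs_norm k (\<lambda>y. grad (\<lambda>x'. k x' y) x \<bullet> i))\<^sup>2) \<le> B"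
    and A2: "\<exists>M>0. \<forall>x. onorm (hessian V x) \<le> M"
    and B1: "\<exists>CV. \<forall>x. norm (grad V x) \<le> CV"
    and B2: "\<exists>D>0. continuous_on UNIV (\<lambda>p. k (fst p) (snd p)) \<and>
               (\<forall>x x' y y'. \<bar>k x x' - k y y'\<bar> \<le> D * (norm (x - y) + norm (x' - y'))) \<and>
               (\<forall>p. (\<lambda>p. k (fst p) (snd p)) differentiable (at p)) \<and>
               continuous_on UNIV (grad (\<lambda>p. k (fst p) (snd p))) \<and>
               (\<forall>x x' y y'. norm (grad (\<lambda>p. k (fst p) (snd p)) (x, x')
                                  - grad (\<lambda>p. k (fst p) (snd p)) (y, y'))
                            \<le> D * (norm (x - y) + norm (x' - y')))"
  shows "\<exists>L. \<forall>z z' \<mu> \<mu>'. \<mu> \<in> P2 \<longrightarrow> \<mu>' \<in> P2 \<longrightarrow>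
           norm (stein_field k V \<mu> z - stein_field k V \<mu>' z') \<le> L * (norm (z - z') + W2 \<mu> \<mu>')"
proof -
  obtain B where B0: "B > 0" and BA: "\<And>x. in_rkhs k (k x) \<and> rkhs_norm k (k x) \<le> B"
    using A1 by blast
  have kxx: "0 \<le> k x x" for x
    using psd[unfolded psd_kernel_def, THEN conjunct2, THEN spec[of _ 1], THEN spec[of _ "\<lambda>_. x"], THEN spec[of _ "\<lambda>_. 1"]]
    by simp
  have sqB: "sqrt (k x x) \<le> B" for x
  proof -
    have "\<bar>k x x\<bar> \<le> rkhs_norm k (k x) * sqrt (k x x)" using rkhs_point[OF _ psd] BA by blast
    also have "\<dots> \<le> B * sqrt (k x x)" using BA kxx[of x] by (intro mult_right_mono) auto
    finally have "sqrt (k x x) * sqrt (k x x) \<le> B * sqrt (k x x)" using kxx[of x] by simp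
    then show ?thesis
    proof (cases "sqrt (k x x) = 0")
      case False
      then have "sqrt (k x x) > 0" using kxx[of x] by simp
      with \<open>sqrt (k x x) * sqrt (k x x) \<le> B * sqrt (k x x)\<close> show ?thesis
        by (rule mult_right_le_imp_le)
    qed (use B0 in simp)
  qed
  have kb: "\<bar>k x y\<bar> \<le> B * B" for x y
  proof -
    have "\<bar>k x y\<bar> \<le> rkhs_norm k (k x) * sqrt (k y y)" using rkhs_point[OF _ psd] BA by blast
    also have "\<dots> \<le> B * B" using BA sqB[of y] B0 kxx[of y] by (intro mult_mono) auto
    finally show ?thesis .
  qed
  obtain M where M0: "M > 0" and MH: "\<And>x. onorm (hessian V x) \<le> M" using A2 by blast
  obtain CV where CV: "\<And>x. norm (grad V x) \<le> CV" using B1 by blast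
  have CV0: "0 \<le> CV" using CV[of 0] norm_ge_zero[of "grad V 0"] by linarith
  define kk where "kk = (\<lambda>p::'a \<times> 'a. k (fst p) (snd p))"
  obtain D where D0: "D > 0"
    and kL: "\<And>x x' y y'. \<bar>k x x' - k y y'\<bar> \<le> D * (norm (x - y) + norm (x' - y'))"
    and kkd: "\<And>p. kk differentiable (at p)"
    and gkL: "\<And>x x' y y'. norm (grad kk (x, x') - grad kk (y, y')) \<le> D * (norm (x - y) + norm (x' - y'))"
    using B2 unfolding kk_def by blast
  have hd: "(grad V has_derivative hessian V x) (at x within UNIV)" for x
    using V_C2(2) unfolding hessian_def by (simp add: frechet_derivative_works)
  have gL: "norm (grad V x - grad V y) \<le> M * norm (x - y)" for x y
    by (rule differentiable_bound[where f'="hessian V", OF convex_UNIV hd]) (auto simp: MH)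
  have Vd: "(V has_derivative (\<lambda>h. grad V x \<bullet> h)) (at x)" for x
    using V_C2(1) by (simp add: grad_works)
  define Z where "Z = (\<integral>y. exp (- V y) \<partial>lborel)"
  have Z0: "Z > 0"
  proof -
    have "Z \<ge> 0" unfolding Z_def by (rule integral_nonneg_AE) auto
    moreover have "Z \<noteq> 0"
    proof
      assume "Z = 0"
      then have "AE x in lborel. exp (- V x) = 0"
        using integral_nonneg_eq_0_iff_AE[OF pi_int] unfolding Z_def by auto
      then have "AE x in (lborel :: 'a measure). False" by simp
      then have "ae_filter (lborel :: 'a measure) = bot" using trivial_limit_def by blast
      then show False by (simp add: ae_filter_eq_bot_iff)
    qed
    ultimately show ?thesis by simp
  qed
  have lng: "grad (\<lambda>y. ln (target_density V y)) x = - grad V x" for x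
  proof -
    have "(\<lambda>y. ln (target_density V y)) = (\<lambda>y. - V y - ln Z)"
      using Z0 by (auto simp: target_density_def Z_def[symmetric] ln_div)
    moreover have "((\<lambda>y. - V y - ln Z) has_derivative (\<lambda>h. (- grad V x) \<bullet> h)) (at x)"
    proof -
      have "((\<lambda>y. - V y - ln Z) has_derivative (\<lambda>h. - (grad V x \<bullet> h) - 0)) (at x)"
        by (intro has_derivative_diff has_derivative_minus Vd has_derivative_const)
      then show ?thesis by simp
    qed
    ultimately show ?thesis using grad_eqI by metis
  qed
  have pg: "grad (\<lambda>y. k y z) x = fst (grad kk (x, z))" for x z
  proof -
    have kd: "(kk has_derivative (\<lambda>h. grad kk (x, z) \<bullet> h)) (at (x, z))"
      using kkd by (simp add: grad_works)
    have pd: "((\<lambda>y. (y, z)) has_derivative (\<lambda>h. (h, 0))) (at x)"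
      by (auto intro!: derivative_eq_intros)
    have "((kk \<circ> (\<lambda>y. (y, z))) has_derivative ((\<lambda>h. grad kk (x, z) \<bullet> h) \<circ> (\<lambda>h. (h, 0)))) (at x)"
      by (rule diff_chain_at[OF pd]) (use kd in simp)
    moreover have "kk \<circ> (\<lambda>y. (y, z)) = (\<lambda>y. k y z)" by (auto simp: kk_def)
    moreover have "(\<lambda>h. grad kk (x, z) \<bullet> h) \<circ> (\<lambda>h. (h, 0)) = (\<lambda>h. fst (grad kk (x, z)) \<bullet> h)"
      by (cases "grad kk (x, z)") (auto simp: o_def)
    ultimately show ?thesis using grad_eqI by metis
  qed
  define F where "F x z = k x z *\<^sub>R (- grad V x) + fst (grad kk (x, z))" for x z
  have stein: "stein_field k V \<mu> z = - (\<integral>x. F x z \<partial>\<mu>)" for \<mu> z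
    unfolding stein_field_def F_def lng pg by simp
  define Lf where "Lf = D * CV + B * B * M + D"
  have Lf0: "Lf > 0" unfolding Lf_def using D0 CV0 B0 M0 by (simp add: add_nonneg_pos)
  have FL: "norm (F x z - F y z') \<le> Lf * (norm (x - y) + norm (z - z'))" for x y z z'
  proof -
    define s where "s = norm (x - y) + norm (z - z')"
    have s0: "0 \<le> s" and sx: "norm (x - y) \<le> s" unfolding s_def by auto
    have e1: "k x z *\<^sub>R (- grad V x) - k y z' *\<^sub>R (- grad V y)
        = - ((k x z - k y z') *\<^sub>R grad V x + k y z' *\<^sub>R (grad V x - grad V y))"
      by (simp add: algebra_simps)
    have "norm ((k x z - k y z') *\<^sub>R grad V x) \<le> (D * s) * CV"
      unfolding norm_scaleR using kL[of x z y z'] CV[of x] s_def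
      by (intro mult_mono) auto
    moreover have "norm (k y z' *\<^sub>R (grad V x - grad V y)) \<le> (B * B) * (M * s)"
      unfolding norm_scaleR using kb[of y z'] gL[of x y] sx M0
      by (intro mult_mono) (auto intro: order_trans)
    ultimately have t1: "norm (k x z *\<^sub>R (- grad V x) - k y z' *\<^sub>R (- grad V y)) \<le> D * s * CV + B * B * (M * s)"
      unfolding e1 norm_minus_cancel using norm_triangle_ineq[of "(k x z - k y z') *\<^sub>R grad V x" "k y z' *\<^sub>R (grad V x - grad V y)"]
      by linarith
    have "norm (fst (grad kk (x, z)) - fst (grad kk (y, z'))) = norm (fst (grad kk (x, z) - grad kk (y, z')))"
      by simp
    also have "\<dots> \<le> norm (grad kk (x, z) - grad kk (y, z'))"
      by (metis norm_fst_le prod.collapse)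
    also have "\<dots> \<le> D * s" unfolding s_def by (rule gkL)
    finally have t2: "norm (fst (grad kk (x, z)) - fst (grad kk (y, z'))) \<le> D * s" .
    have eqF: "F x z - F y z' = (k x z *\<^sub>R (- grad V x) - k y z' *\<^sub>R (- grad V y)) + (fst (grad kk (x, z)) - fst (grad kk (y, z')))"
      unfolding F_def by (simp add: algebra_simps)
    have "norm (F x z - F y z') \<le> D * s * CV + B * B * (M * s) + D * s"
      unfolding eqF using norm_triangle_ineq[of "k x z *\<^sub>R (- grad V x) - k y z' *\<^sub>R (- grad V y)" "fst (grad kk (x, z)) - fst (grad kk (y, z'))"] t1 t2
      by linarith
    also have "\<dots> = Lf * s" unfolding Lf_def by (simp add: algebra_simps)
    finally show ?thesis unfolding s_def .
  qed
  have Fmeas: "(\<lambda>x. F x z) \<in> borel_measurable borel" for z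
  proof -
    have "Lf-lipschitz_on UNIV (\<lambda>x. F x z)"
      by (rule lipschitz_onI) (use FL[of _ z _ z] Lf0 in \<open>auto simp: dist_norm\<close>)
    then show ?thesis by (intro borel_measurable_continuous_onI lipschitz_on_continuous_on)
  qed
  have Fint: "integrable \<mu> (\<lambda>x. F x z)" if P: "\<mu> \<in> P2" for \<mu> z
  proof -
    note pp = P2_props[OF P]
    interpret prob_space \<mu> by (rule pp(1))
    show ?thesis
    proof (rule Bochner_Integration.integrable_bound[where f="\<lambda>x. norm (F 0 z) + Lf + Lf * (norm x)\<^sup>2"])
      show "integrable \<mu> (\<lambda>x. norm (F 0 z) + Lf + Lf * (norm x)\<^sup>2)"
        using pp(4) by auto
      show "(\<lambda>x. F x z) \<in> borel_measurable \<mu>"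
        by (subst measurable_cong_sets[OF pp(2) refl]) (rule Fmeas)
      show "AE x in \<mu>. norm (F x z) \<le> norm (norm (F 0 z) + Lf + Lf * (norm x)\<^sup>2)"
      proof (rule AE_I2)
        fix x
        have "norm (F x z) \<le> norm (F 0 z) + norm (F x z - F 0 z)" by (rule norm_triangle_sub)
        also have "\<dots> \<le> norm (F 0 z) + Lf * norm x" using FL[of x z 0 z] by simp
        also have "\<dots> \<le> norm (F 0 z) + Lf + Lf * (norm x)\<^sup>2"
        proof -
          have "norm x * 2 \<le> 1 + norm x * norm x"
            using sum_squares_ge_zero[of "norm x - 1" 0] by (simp add: power2_eq_square algebra_simps)
          then have "norm x \<le> 1 + (norm x)\<^sup>2"
            using norm_ge_zero[of x] unfolding power2_eq_square by linarith
          then have "Lf * norm x \<le> Lf * (1 + (norm x)\<^sup>2)" using Lf0 by (intro mult_left_mono) auto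
          then show ?thesis by (simp add: algebra_simps)
        qed
        also have "\<dots> = norm (norm (F 0 z) + Lf + Lf * (norm x)\<^sup>2)" using Lf0 by simp
        finally show "norm (F x z) \<le> norm (norm (F 0 z) + Lf + Lf * (norm x)\<^sup>2)" .
      qed
    qed
  qed
  have main: "norm ((\<integral>x. F x z \<partial>\<mu>) - (\<integral>x. F x z' \<partial>\<mu>'))
      \<le> Lf * norm (z - z') + Lf * sqrt (enn2real (\<integral>\<^sup>+p. ennreal ((norm (fst p - snd p))\<^sup>2) \<partial>\<gamma>))"
    if P: "\<mu> \<in> P2" "\<mu>' \<in> P2" and g: "\<gamma> \<in> couplings \<mu> \<mu>'" for \<mu> \<mu>' \<gamma> z z'
  proof -
    note cp = coupling_props[OF g]
    interpret prob_space \<gamma> by (rule cp(1))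
    define X where "X p = norm (fst p - snd p)" for p :: "'a \<times> 'a"
    define I where "I = (\<integral>\<^sup>+p. ennreal ((norm (fst p - snd p))\<^sup>2) \<partial>\<gamma>)"
    have fin: "I < \<infinity>" unfolding I_def by (rule coupling_cost_fin[OF g P])
    have Xm: "X \<in> borel_measurable \<gamma>" unfolding X_def
      by (subst measurable_cong_sets[OF cp(7) refl]) measurable
    have X2m: "(\<lambda>p. (X p)\<^sup>2) \<in> borel_measurable \<gamma>" using Xm by measurable
    have int2: "integrable \<gamma> (\<lambda>p. (X p)\<^sup>2)"
      unfolding integrable_iff_bounded using X2m fin by (simp add: I_def X_def)
    have int1: "integrable \<gamma> X"
    proof (rule Bochner_Integration.integrable_bound[where f="\<lambda>p. 1 + (X p)\<^sup>2"])
      show "integrable \<gamma> (\<lambda>p. 1 + (X p)\<^sup>2)" using int2 by auto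
      show "X \<in> borel_measurable \<gamma>" by (rule Xm)
      show "AE p in \<gamma>. norm (X p) \<le> norm (1 + (X p)\<^sup>2)"
      proof (rule AE_I2)
        fix p
        have x0: "0 \<le> X p" unfolding X_def by simp
        have "X p * 2 \<le> 1 + X p * X p"
          using sum_squares_ge_zero[of "X p - 1" 0] by (simp add: power2_eq_square algebra_simps)
        then show "norm (X p) \<le> norm (1 + (X p)\<^sup>2)"
          using x0 unfolding power2_eq_square by simp
      qed
    qed
    have Ieq: "enn2real I = (\<integral>p. (X p)\<^sup>2 \<partial>\<gamma>)"
    proof -
      have "I = ennreal (\<integral>p. (X p)\<^sup>2 \<partial>\<gamma>)"
        unfolding I_def X_def[symmetric] by (rule nn_integral_eq_integral[OF int2]) auto
      then show ?thesis by simp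
    qed
    have jen: "(\<integral>p. X p \<partial>\<gamma>)\<^sup>2 \<le> (\<integral>p. (X p)\<^sup>2 \<partial>\<gamma>)"
      using variance_eq[OF int1 int2] variance_positive[of X] by simp
    have EX: "(\<integral>p. X p \<partial>\<gamma>) \<le> sqrt (enn2real I)"
      unfolding Ieq by (rule real_le_rsqrt[OF jen])
    have tr1: "(\<integral>x. F x z \<partial>\<mu>) = (\<integral>p. F (fst p) z \<partial>\<gamma>)"
    proof -
      have "integral\<^sup>L (distr \<gamma> borel fst) (\<lambda>x. F x z) = (\<integral>p. F (fst p) z \<partial>\<gamma>)"
        by (rule integral_distr[OF cp(5) Fmeas])
      then show ?thesis using cp(3) by simp
    qed
    have tr2: "(\<integral>x. F x z' \<partial>\<mu>') = (\<integral>p. F (snd p) z' \<partial>\<gamma>)"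
    proof -
      have "integral\<^sup>L (distr \<gamma> borel snd) (\<lambda>x. F x z') = (\<integral>p. F (snd p) z' \<partial>\<gamma>)"
        by (rule integral_distr[OF cp(6) Fmeas])
      then show ?thesis using cp(4) by simp
    qed
    have i1: "integrable \<gamma> (\<lambda>p. F (fst p) z)"
      using integrable_distr_eq[OF cp(5) Fmeas, of z] cp(3) Fint[OF P(1), of z] by simp
    have i2: "integrable \<gamma> (\<lambda>p. F (snd p) z')"
      using integrable_distr_eq[OF cp(6) Fmeas, of z'] cp(4) Fint[OF P(2), of z'] by simp
    have "norm ((\<integral>x. F x z \<partial>\<mu>) - (\<integral>x. F x z' \<partial>\<mu>'))
        = norm (\<integral>p. F (fst p) z - F (snd p) z' \<partial>\<gamma>)"
      unfolding tr1 tr2 by (simp add: Bochner_Integration.integral_diff[OF i1 i2])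
    also have "\<dots> \<le> (\<integral>p. Lf * X p + Lf * norm (z - z') \<partial>\<gamma>)"
    proof (rule Bochner_Integration.integral_norm_bound_integral)
      show "integrable \<gamma> (\<lambda>p. F (fst p) z - F (snd p) z')" using i1 i2 by auto
      show "integrable \<gamma> (\<lambda>p. Lf * X p + Lf * norm (z - z'))" using int1 by auto
      fix p
      show "norm (F (fst p) z - F (snd p) z') \<le> Lf * X p + Lf * norm (z - z')"
        using FL[of "fst p" z "snd p" z'] unfolding X_def by (simp add: algebra_simps)
    qed
    also have "\<dots> = Lf * (\<integral>p. X p \<partial>\<gamma>) + Lf * norm (z - z')"
      using int1 by (simp add: prob_space)
    also have "\<dots> \<le> Lf * norm (z - z') + Lf * sqrt (enn2real I)"
      using EX Lf0 mult_left_mono[OF EX, of Lf] by simp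
    finally show ?thesis unfolding I_def .
  qed
  show ?thesis
  proof (intro exI allI impI)
    fix z z' :: 'a and \<mu> \<mu>' :: "'a measure"
    assume P: "\<mu> \<in> P2" "\<mu>' \<in> P2"
    define I0 where "I0 = (INF \<gamma>\<in>couplings \<mu> \<mu>'. \<integral>\<^sup>+p. ennreal ((norm (fst p - snd p))\<^sup>2) \<partial>\<gamma>)"
    have W: "W2 \<mu> \<mu>' = sqrt (enn2real I0)" unfolding W2_def I0_def ..
    define Q where "Q = norm ((\<integral>x. F x z \<partial>\<mu>) - (\<integral>x. F x z' \<partial>\<mu>'))"
    have LQ: "norm (stein_field k V \<mu> z - stein_field k V \<mu>' z') = Q"
      unfolding Q_def stein by (simp add: norm_minus_commute)
    have W0: "0 \<le> W2 \<mu> \<mu>'" unfolding W by simp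
    have "Q \<le> Lf * (norm (z - z') + W2 \<mu> \<mu>')"
    proof (cases "Q \<le> Lf * norm (z - z')")
      case True
      then show ?thesis using W0 Lf0 by (simp add: distrib_left add_increasing2)
    next
      case False
      define a where "a = (Q - Lf * norm (z - z')) / Lf"
      have a0: "0 < a" unfolding a_def using False Lf0 by simp
      have Qa: "Q = Lf * norm (z - z') + Lf * a" unfolding a_def using Lf0 by simp
      have low: "ennreal (a\<^sup>2) \<le> (\<integral>\<^sup>+p. ennreal ((norm (fst p - snd p))\<^sup>2) \<partial>\<gamma>)"
        if g: "\<gamma> \<in> couplings \<mu> \<mu>'" for \<gamma>
      proof -
        define J where "J = (\<integral>\<^sup>+p. ennreal ((norm (fst p - snd p))\<^sup>2) \<partial>\<gamma>)"
        have Jf: "J < \<infinity>" unfolding J_def by (rule coupling_cost_fin[OF g P])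
        have "Lf * a \<le> Lf * sqrt (enn2real J)"
          using main[OF P g, of z z'] unfolding J_def Q_def[symmetric] Qa by simp
        then have "a \<le> sqrt (enn2real J)" using Lf0 by simp
        then have "a\<^sup>2 \<le> (sqrt (enn2real J))\<^sup>2" using a0 by (intro power_mono) auto
        then have "a\<^sup>2 \<le> enn2real J" by simp
        then have "ennreal (a\<^sup>2) \<le> ennreal (enn2real J)" by (rule ennreal_leI)
        also have "ennreal (enn2real J) = J" using Jf by simp
        finally show ?thesis unfolding J_def .
      qed
      have lowI: "ennreal (a\<^sup>2) \<le> I0" unfolding I0_def by (rule INF_greatest) (rule low)
      have "I0 \<le> (\<integral>\<^sup>+p. ennreal ((norm (fst p - snd p))\<^sup>2) \<partial>(\<mu> \<Otimes>\<^sub>M \<mu>'))"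
        unfolding I0_def by (rule INF_lower) (rule product_coupling[OF P])
      also have "\<dots> < \<infinity>" by (rule coupling_cost_fin[OF product_coupling[OF P] P])
      finally have I0f: "I0 < \<infinity>" .
      have "enn2real (ennreal (a\<^sup>2)) \<le> enn2real I0" by (rule enn2real_mono[OF lowI]) (use I0f in simp)
      then have "a\<^sup>2 \<le> enn2real I0" by simp
      then have "a \<le> W2 \<mu> \<mu>'" unfolding W by (rule real_le_rsqrt)
      then have "Lf * a \<le> Lf * W2 \<mu> \<mu>'" using Lf0 by simp
      then show ?thesis unfolding Qa by (simp add: distrib_left)
    qed
    then show "norm (stein_field k V \<mu> z - stein_field k V \<mu>' z') \<le> Lf * (norm (z - z') + W2 \<mu> \<mu>')"
      unfolding LQ .
  qed
qed

end
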